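(* Let $X$ be a real Hilbert space and $A,B$ closed convex nonempty subsets of $X$ such that $E$ and $F$ are nonempty and bounded. Let $\{A_n\}$, $\{B_n\}$ be sequences of closed convex nonempty subsets of $X$ with $A_n\to A$ and $B_n\to B$ in the Attouch–Wets sense. Suppose the couple $(A,B)$ is regular, and let $\delta,\epsilon>0$. For each $n\in\mathbb N$ let $a_n,x_n\in A_n$ and $b_n,y_n\in B_n$ be such that $\mathrm{dist}(x_n,E)\to0$ and $\mathrm{dist}(y_n,F)\to0$. Then there exists $n_2\in\mathbb N$ such that for every $n\ge n_2$: (i) if $\mathrm{dist}(a_n,E)\ge 2\epsilon$, $\mathrm{dist}(b_n,F)\ge2\epsilon$ and $a_n=P_{A_n}b_n$, then $\cos\bigl(x_n-a_n,\,b_n-(a_n+v)\bigr)\le\delta$; (ii) if $\mathrm{dist}(a_n,E)\ge 2\epsilon$, $\mathrm{dist}(b_{n+1},F)\ge2\epsilon$ and $b_{n+1}=P_{B_{n+1}}a_n$, then $\cos\bigl(y_{n+1}-b_{n+1},\,a_n+v-b_{n+1}\bigr)\le\delta$.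
   Context: $P_C$ denotes the metric projection onto a closed convex nonempty set $C$; $B_X$ is the closed unit ball; $\mathrm{dist}(x,S)=\inf_{s\in S}\|x-s\|$, $\mathrm{dist}(S,T)=\inf_{s\in S}\mathrm{dist}(s,T)$. $E=\{a\in A:\mathrm{dist}(a,B)=\mathrm{dist}(A,B)\}$, $F=\{b\in B:\mathrm{dist}(b,A)=\mathrm{dist}(A,B)\}$, $v=P_{\overline{B-A}}(0)$. For nonzero $u,w$, $\cos(u,w)=\langle u,w\rangle/(\|u\|\|w\|)$. Attouch–Wets convergence: for nonempty closed $C,D$ and $N\in\mathbb N$ let $e_N(C,D)=\sup_{c\in C\cap NB_X}\mathrm{dist}(c,D)$ ($0$ if $C\cap NB_X=\emptyset$) and $h_N(C,D)=\max\{e_N(C,D),e_N(D,C)\}$; $C_j\to C$ if $\lim_j h_N(C_j,C)=0$ for every $N$. The couple $(A,B)$ (with $E,F\ne\emptyset$) is regular if for each $\epsilon>0$ there is $\delta>0$ such that $\mathrm{dist}(x,E)\le\epsilon$ whenever $\max\{\mathrm{dist}(x,A),\mathrm{dist}(x,B-v)\}\le\delta$. *)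

theory Defs
  imports "HOL-Analysis.Analysis"
begin

text \<open>Metric projection onto C (the unique nearest point; well defined for closed convex
nonempty C in a real Hilbert space).\<close>
definition metric_proj :: "'a::real_inner set \<Rightarrow> 'a \<Rightarrow> 'a" where
  "metric_proj C x = (THE y. y \<in> C \<and> (\<forall>c\<in>C. norm (x - y) \<le> norm (x - c)))"

definition minkowski_diff :: "'a::real_vector set \<Rightarrow> 'a set \<Rightarrow> 'a set" where
  "minkowski_diff B A = {b - a | a b. a \<in> A \<and> b \<in> B}"

definition best_A :: "'a::real_normed_vector set \<Rightarrow> 'a set \<Rightarrow> 'a set" where
  "best_A A B = {a \<in> A. infdist a B = setdist A B}"

definition best_B :: "'a::real_normed_vector set \<Rightarrow> 'a set \<Rightarrow> 'a set" where
  "best_B A B = {b \<in> B. infdist b A = setdist A B}"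

definition gap_vec :: "'a::real_inner set \<Rightarrow> 'a set \<Rightarrow> 'a" where
  "gap_vec A B = metric_proj (closure (minkowski_diff B A)) 0"

definition cosv :: "'a::real_inner \<Rightarrow> 'a \<Rightarrow> real" where
  "cosv u w = inner u w / (norm u * norm w)"

definition aw_exc :: "nat \<Rightarrow> 'a::real_normed_vector set \<Rightarrow> 'a set \<Rightarrow> real" where
  "aw_exc N C D = (if C \<inter> cball 0 (real N) = {} then 0
                   else (SUP c\<in>C \<inter> cball 0 (real N). infdist c D))"

definition aw_dist :: "nat \<Rightarrow> 'a::real_normed_vector set \<Rightarrow> 'a set \<Rightarrow> real" where
  "aw_dist N C D = max (aw_exc N C D) (aw_exc N D C)"

definition aw_conv :: "(nat \<Rightarrow> 'a::real_normed_vector set) \<Rightarrow> 'a set \<Rightarrow> bool" where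
  "aw_conv Cs C \<longleftrightarrow> (\<forall>N. (\<lambda>j. aw_dist N (Cs j) C) \<longlonglongrightarrow> 0)"

definition regular_couple :: "'a::real_inner set \<Rightarrow> 'a set \<Rightarrow> bool" where
  "regular_couple A B \<longleftrightarrow>
     (\<forall>\<epsilon>>0. \<exists>\<delta>>0. \<forall>x. max (infdist x A) (infdist x ((\<lambda>b. b - gap_vec A B) ` B)) \<le> \<delta>
                         \<longrightarrow> infdist x (best_A A B) \<le> \<epsilon>)"

end

theory Submission
  imports Defs
begin


lemma para_law:
  fixes a b z :: "'a::real_inner"
  shows "norm (a - b)^2 = 2*norm (z-a)^2 + 2*norm (z-b)^2 - 4*norm (z - (1/2) *\<^sub>R (a+b))^2"
  unfolding power2_norm_eq_inner
  by (simp add: inner_diff inner_add inner_commute algebra_simps)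

lemma infdist_ltE':
  assumes "A \<noteq> {}" "infdist x A < r"
  shows "\<exists>a\<in>A. dist x a < r"
  using assms by (simp add: infdist_notempty cINF_less_iff)

lemma infdist_geI:
  assumes "A \<noteq> {}" "\<And>a. a \<in> A \<Longrightarrow> r \<le> dist x a"
  shows "r \<le> infdist x A"
  using assms by (simp add: infdist_notempty cINF_greatest)

lemma proj_exists:
  fixes C :: "'a::{real_inner,complete_space} set"
  assumes "closed C" "convex C" "C \<noteq> {}"
  shows "\<exists>y\<in>C. \<forall>c\<in>C. norm (z - y) \<le> norm (z - c)"
proof -
  define d where "d = infdist z C"
  have d0: "d \<ge> 0" unfolding d_def by (rule infdist_nonneg)
  have low: "\<And>c. c \<in> C \<Longrightarrow> d \<le> norm (z - c)"
    unfolding d_def by (metis dist_norm infdist_le)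
  have "\<forall>n::nat. \<exists>y\<in>C. dist z y < d + 1/Suc n"
    using infdist_ltE'[OF assms(3)] unfolding d_def by simp
  then obtain Y where Y: "\<And>n. Y n \<in> C" "\<And>n. norm (z - Y n) < d + 1/Suc n"
    by (metis dist_norm)
  have bnd: "norm (Y m - Y n)^2 \<le> 4*(2*d+1)/Suc M" if "m \<ge> M" "n \<ge> M" for m n M
  proof -
    have mid: "(1/2) *\<^sub>R (Y m + Y n) \<in> C"
      using convexD[OF assms(2) Y(1)[of m] Y(1)[of n], of "1/2" "1/2"]
      by (simp add: scaleR_add_right)
    have l: "d \<le> norm (z - (1/2) *\<^sub>R (Y m + Y n))" using low[OF mid] .
    have sq: "\<And>k. k \<ge> M \<Longrightarrow> norm (z - Y k)^2 \<le> d^2 + (2*d+1)/Suc M"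
    proof -
      fix k assume k: "k \<ge> M"
      have i: "1/real (Suc k) \<le> 1/Suc M" using k by (simp add: frac_le)
      have i1: "1/real (Suc k) \<le> 1" by simp
      have "norm (z - Y k) \<le> d + 1/Suc k" using Y(2)[of k] by simp
      hence "norm (z - Y k)^2 \<le> (d + 1/Suc k)^2"
        by (simp add: power_mono)
      also have "\<dots> = d^2 + 2*d*(1/Suc k) + (1/Suc k)*(1/Suc k)"
        by (simp add: power2_eq_square algebra_simps)
      also have "\<dots> \<le> d^2 + 2*d*(1/Suc M) + 1*(1/Suc M)"
        apply (intro add_mono mult_left_mono mult_mono i i1) using d0 by auto
      finally show "norm (z - Y k)^2 \<le> d^2 + (2*d+1)/Suc M"
        by (simp add: algebra_simps add_divide_distrib)
    qed
    have "d^2 \<le> norm (z - (1/2) *\<^sub>R (Y m + Y n))^2" using l d0 by (simp add: power_mono)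
    thus ?thesis using para_law[of "Y m" "Y n" z] sq[OF that(1)] sq[OF that(2)] by linarith
  qed
  have "Cauchy Y"
  proof (rule metric_CauchyI)
    fix e :: real assume e: "e > 0"
    obtain M :: nat where M: "4*(2*d+1)/e^2 < M" using reals_Archimedean2 by blast
    have "4*(2*d+1)/Suc M < e^2"
    proof -
      have "4*(2*d+1) < e^2 * M" using M e by (simp add: field_simps)
      also have "\<dots> \<le> e^2 * Suc M" using e by simp
      finally show ?thesis by (simp add: field_simps)
    qed
    hence "\<forall>m\<ge>M. \<forall>n\<ge>M. dist (Y m) (Y n) < e"
      using bnd e by (smt (verit) dist_norm norm_ge_zero power_mono)
    thus "\<exists>M. \<forall>m\<ge>M. \<forall>n\<ge>M. dist (Y m) (Y n) < e" by blast
  qed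
  then obtain y where y: "Y \<longlonglongrightarrow> y" using convergent_eq_Cauchy by blast
  have yC: "y \<in> C" using closed_sequentially[OF assms(1)] Y(1) y by blast
  have "(\<lambda>n. norm (z - Y n)) \<longlonglongrightarrow> norm (z - y)" by (intro tendsto_intros y)
  moreover have "(\<lambda>n. d + 1/Suc n) \<longlonglongrightarrow> d + 0"
    using LIMSEQ_inverse_real_of_nat by (intro tendsto_intros) (simp add: inverse_eq_divide)
  ultimately have "norm (z - y) \<le> d"
    using Y(2) by (intro LIMSEQ_le[where X="\<lambda>n. norm (z - Y n)"]) (auto intro: less_imp_le)
  thus ?thesis using yC low by (meson order_trans)
qed


lemma exp_sq: fixes a b :: "'a::real_inner"
  shows "norm (a - t *\<^sub>R b)^2 = norm a^2 - 2*t*inner b a + t*t*norm b^2"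
  unfolding power2_norm_eq_inner
  by (simp add: inner_diff_left inner_diff_right inner_commute[of b a] algebra_simps)

lemma proj_unique:
  fixes C :: "'a::real_inner set"
  assumes "convex C" "y1 \<in> C" "y2 \<in> C"
    "\<forall>c\<in>C. norm (z - y1) \<le> norm (z - c)" "\<forall>c\<in>C. norm (z - y2) \<le> norm (z - c)"
  shows "y1 = y2"
proof -
  have mid: "(1/2) *\<^sub>R (y1 + y2) \<in> C"
    using convexD[OF assms(1) assms(2) assms(3), of "1/2" "1/2"] by (simp add: scaleR_add_right)
  have e: "norm (z - y1) = norm (z - y2)" using assms by (meson antisym)
  have "norm (z - y1) \<le> norm (z - (1/2) *\<^sub>R (y1 + y2))" using assms(4) mid by blast
  hence "norm (z - y1)^2 \<le> norm (z - (1/2) *\<^sub>R (y1 + y2))^2" by (simp add: power_mono)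
  moreover have "norm (z - y1)^2 = norm (z - y2)^2" using e by simp
  ultimately have "norm (y1 - y2)^2 \<le> 0" using para_law[of y1 y2 z] by linarith
  thus ?thesis by simp
qed

lemma metric_proj_props:
  fixes C :: "'a::{real_inner,complete_space} set"
  assumes "closed C" "convex C" "C \<noteq> {}"
  shows "metric_proj C z \<in> C" "\<And>c. c \<in> C \<Longrightarrow> norm (z - metric_proj C z) \<le> norm (z - c)"
    "\<And>c. c \<in> C \<Longrightarrow> inner (c - metric_proj C z) (z - metric_proj C z) \<le> 0"
proof -
  obtain y where y: "y \<in> C" "\<forall>c\<in>C. norm (z - y) \<le> norm (z - c)"
    using proj_exists[OF assms] by blast
  have "metric_proj C z = y"
    unfolding metric_proj_def
    apply (rule the_equality)
    using y apply blast
    using proj_unique[OF assms(2)] y by blast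
  thus m: "metric_proj C z \<in> C" "\<And>c. c \<in> C \<Longrightarrow> norm (z - metric_proj C z) \<le> norm (z - c)"
    using y by auto
  fix c assume c: "c \<in> C"
  show "inner (c - metric_proj C z) (z - metric_proj C z) \<le> 0"
  proof (rule ccontr)
    let ?y = "metric_proj C z"
    define p where "p = inner (c - ?y) (z - ?y)"
    assume "\<not> ?thesis"
    hence p: "p > 0" unfolding p_def by simp
    hence cy: "c \<noteq> ?y" unfolding p_def by auto
    define q where "q = norm (c - ?y)^2"
    have q: "q > 0" unfolding q_def using cy by simp
    define t where "t = min 1 (p / q)"
    have t: "0 < t" "t \<le> 1" "t * q \<le> p" using p q unfolding t_def
      by (auto simp: min_def not_le field_simps)
    have inC: "(1 - t) *\<^sub>R ?y + t *\<^sub>R c \<in> C"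
      using convexD[OF assms(2) m(1) c, of "1-t" t] t by simp
    have eq: "z - ((1 - t) *\<^sub>R ?y + t *\<^sub>R c) = (z - ?y) - t *\<^sub>R (c - ?y)"
      by (simp add: algebra_simps)
    have "norm ((z - ?y) - t *\<^sub>R (c - ?y))^2 = norm (z - ?y)^2 - 2*t*p + t*t*q"
      unfolding exp_sq p_def q_def by (simp add: inner_commute)
    also have "\<dots> < norm (z - ?y)^2"
    proof -
      have "t*(t*q) \<le> t*p" using t by (intro mult_left_mono) auto
      moreover have "t * p > 0" using t p by simp
      ultimately show ?thesis by (simp add: algebra_simps)
    qed
    finally have "norm (z - ((1 - t) *\<^sub>R ?y + t *\<^sub>R c)) < norm (z - ?y)"
      unfolding eq by (smt (verit) norm_ge_zero power_mono)
    thus False using m(2)[OF inC] by simp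
  qed
qed

lemma exc_bound:
  fixes C D :: "'a::real_normed_vector set"
  assumes "D \<noteq> {}" "z \<in> C" "norm z \<le> real N"
  shows "infdist z D \<le> aw_exc N C D"
proof -
  obtain d0 where d0: "d0 \<in> D" using assms by auto
  have ne: "C \<inter> cball 0 (real N) \<noteq> {}" using assms by auto
  have "bdd_above ((\<lambda>c. infdist c D) ` (C \<inter> cball 0 (real N)))"
  proof (rule bdd_aboveI2)
    fix c assume "c \<in> C \<inter> cball 0 (real N)"
    hence "norm c \<le> N" by simp
    moreover have "infdist c D \<le> dist c d0" using infdist_le[OF d0] .
    moreover have "dist c d0 \<le> norm c + norm d0" by (simp add: dist_norm norm_triangle_ineq4)
    ultimately show "infdist c D \<le> real N + norm d0" by linarith
  qed
  hence "infdist z D \<le> (SUP c\<in>C \<inter> cball 0 (real N). infdist c D)"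
    using assms by (intro cSUP_upper) auto
  thus ?thesis unfolding aw_exc_def using ne by simp
qed

lemma aw_near1:
  fixes Cs :: "nat \<Rightarrow> 'a::real_normed_vector set"
  assumes "aw_conv Cs C" "C \<noteq> {}" "\<eta> > 0"
  shows "\<forall>\<^sub>F j in sequentially. \<forall>z\<in>Cs j. norm z \<le> real N \<longrightarrow> (\<exists>c\<in>C. dist z c < \<eta>)"
proof -
  have "(\<lambda>j. aw_dist N (Cs j) C) \<longlonglongrightarrow> 0" using assms(1) unfolding aw_conv_def by blast
  hence "\<forall>\<^sub>F j in sequentially. aw_dist N (Cs j) C < \<eta>"
    using assms(3) by (rule order_tendstoD(2))
  thus ?thesis
  proof (rule eventually_mono)
    fix j assume j: "aw_dist N (Cs j) C < \<eta>"
    show "\<forall>z\<in>Cs j. norm z \<le> real N \<longrightarrow> (\<exists>c\<in>C. dist z c < \<eta>)"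
    proof (intro ballI impI)
      fix z assume "z \<in> Cs j" "norm z \<le> real N"
      hence "infdist z C \<le> aw_exc N (Cs j) C" using exc_bound[OF assms(2)] by blast
      hence "infdist z C < \<eta>" using j unfolding aw_dist_def by linarith
      thus "\<exists>c\<in>C. dist z c < \<eta>" using infdist_ltE'[OF assms(2)] by blast
    qed
  qed
qed

lemma aw_near2:
  fixes Cs :: "nat \<Rightarrow> 'a::real_normed_vector set"
  assumes "aw_conv Cs C" "\<And>j. Cs j \<noteq> {}" "\<eta> > 0"
  shows "\<forall>\<^sub>F j in sequentially. \<forall>z\<in>C. norm z \<le> real N \<longrightarrow> (\<exists>c\<in>Cs j. dist z c < \<eta>)"
proof -
  have "(\<lambda>j. aw_dist N (Cs j) C) \<longlonglongrightarrow> 0" using assms(1) unfolding aw_conv_def by blast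
  hence "\<forall>\<^sub>F j in sequentially. aw_dist N (Cs j) C < \<eta>"
    using assms(3) by (rule order_tendstoD(2))
  thus ?thesis
  proof (rule eventually_mono)
    fix j assume j: "aw_dist N (Cs j) C < \<eta>"
    show "\<forall>z\<in>C. norm z \<le> real N \<longrightarrow> (\<exists>c\<in>Cs j. dist z c < \<eta>)"
    proof (intro ballI impI)
      fix z assume "z \<in> C" "norm z \<le> real N"
      hence "infdist z (Cs j) \<le> aw_exc N C (Cs j)" using exc_bound[OF assms(2)] by blast
      hence "infdist z (Cs j) < \<eta>" using j unfolding aw_dist_def by linarith
      thus "\<exists>c\<in>Cs j. dist z c < \<eta>" using infdist_ltE'[OF assms(2)] by blast
    qed
  qed
qed


lemma gap_facts:
  fixes A B :: "'a::{real_inner,complete_space} set"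
  assumes A: "closed A" "convex A" "A \<noteq> {}" and B: "closed B" "convex B" "B \<noteq> {}"
  shows "\<And>e. e \<in> best_A A B \<Longrightarrow> e + gap_vec A B \<in> B"
    and "\<And>f. f \<in> best_B A B \<Longrightarrow> f - gap_vec A B \<in> A"
    and "\<And>a e. a \<in> A \<Longrightarrow> e \<in> best_A A B \<Longrightarrow> inner (a - e) (gap_vec A B) \<le> 0"
    and "\<And>b f. b \<in> B \<Longrightarrow> f \<in> best_B A B \<Longrightarrow> inner (b - f) (gap_vec A B) \<ge> 0"
proof -
  define K where "K = closure (minkowski_diff B A)"
  define v where "v = gap_vec A B"
  have md: "minkowski_diff B A = (\<Union>x\<in>B. \<Union>y\<in>A. {x - y})" unfolding minkowski_diff_def by auto
  have inK: "b - a \<in> K" if "a\<in>A" "b\<in>B" for a b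
  proof -
    have "b - a \<in> minkowski_diff B A" unfolding minkowski_diff_def using that by blast
    thus ?thesis unfolding K_def by (rule subsetD[OF closure_subset])
  qed
  have Kc: "closed K" "convex K" "K \<noteq> {}"
  proof -
    show "closed K" unfolding K_def by (rule closed_closure)
    show "convex K" unfolding K_def md by (rule convex_closure[OF convex_differences[OF B(2) A(2)]])
    obtain a b where "a \<in> A" "b \<in> B" using A(3) B(3) by blast
    thus "K \<noteq> {}" using inK by blast
  qed
  have vdef': "v = metric_proj K 0" unfolding v_def gap_vec_def K_def by (rule refl)
  note P = metric_proj_props[OF Kc, where z=0, folded vdef']
  have vK: "v \<in> K" by (rule P(1))
  have vmin: "norm v \<le> norm k" if k: "k\<in>K" for k
    using P(2)[OF k] by simp
  have vvar: "0 \<le> inner (k - v) v" if k: "k\<in>K" for k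
    using P(3)[OF k] by (simp add: inner_minus_right)
  have sq: "norm (k - v)^2 \<le> norm k^2 - norm v^2" if k: "k \<in> K" for k
  proof -
    have "norm (k - v)^2 = norm k^2 - norm v^2 - 2 * inner (k - v) v"
      unfolding power2_norm_eq_inner
      by (simp add: inner_diff_left inner_diff_right inner_commute[of v k] algebra_simps)
    thus ?thesis using vvar[OF k] by linarith
  qed
  have Dle: "setdist A B \<le> norm v"
  proof (rule field_le_epsilon)
    fix \<tau> :: real assume t: "\<tau> > 0"
    have "v \<in> closure (minkowski_diff B A)" using vK unfolding K_def .
    then obtain k where k: "k \<in> minkowski_diff B A" "dist k v < \<tau>"
      using closure_approachable t by blast
    then obtain a b where ab: "a \<in> A" "b \<in> B" "k = b - a" unfolding minkowski_diff_def by blast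
    have "setdist A B \<le> dist a b" using setdist_le_dist ab by blast
    also have "\<dots> = norm k" using ab by (simp add: dist_norm norm_minus_commute)
    also have "\<dots> \<le> norm v + norm (k - v)" by (metis norm_triangle_sub add.commute)
    finally show "setdist A B \<le> norm v + \<tau>" using k(2) by (simp add: dist_norm)
  qed
  have close: "\<exists>\<tau>>0. \<forall>k\<in>K. norm k < norm v + \<tau> \<longrightarrow> norm (k - v) < \<eta>" if eta: "\<eta> > 0" for \<eta>
  proof -
    define \<tau> where "\<tau> = min 1 (\<eta>^2/(2*(2*norm v + 1)))"
    have h1: "(2::real)*(2*norm v + 1) = 4*norm v + 2" by (simp add: algebra_simps)
    have h2: "0 \<le> 4*norm v" by simp
    have den: "(2::real)*(2*norm v + 1) > 0" unfolding h1 using h2 by linarith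
    hence pos: "\<eta>^2/(2*(2*norm v + 1)) > 0" using eta by simp
    have t: "\<tau> > 0" "\<tau> \<le> 1" "\<tau> \<le> \<eta>^2/(2*(2*norm v + 1))" using pos unfolding \<tau>_def by auto
    have "\<tau> * (2*(2*norm v + 1)) \<le> \<eta>^2" using t(3) pos_le_divide_eq[OF den] by blast
    moreover have "\<tau> * (2*(2*norm v + 1)) = 2*(\<tau> * (2*norm v + 1))" by (simp add: algebra_simps)
    ultimately have "\<tau> * (2*norm v + 1) \<le> \<eta>^2/2" by linarith
    moreover have "\<tau> * (2*norm v + \<tau>) \<le> \<tau> * (2*norm v + 1)"
      using t by (intro mult_left_mono) auto
    moreover have "\<eta>^2/2 < \<eta>^2" using eta by simp
    ultimately have t2: "\<tau> * (2*norm v + \<tau>) < \<eta>^2" by linarith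
    have "norm (k - v) < \<eta>" if k: "k \<in> K" "norm k < norm v + \<tau>" for k
    proof -
      have "norm k^2 < (norm v + \<tau>)^2" using k(2) by (simp add: power_strict_mono)
      moreover have "(norm v + \<tau>)^2 = norm v^2 + \<tau> * (2*norm v + \<tau>)"
        by (simp add: power2_eq_square algebra_simps)
      ultimately have "norm (k - v)^2 < \<eta>^2" using sq[OF k(1)] t2 by linarith
      thus ?thesis using eta by (simp add: power_less_imp_less_base)
    qed
    thus ?thesis using t(1) by blast
  qed
  show "e + gap_vec A B \<in> B" if e: "e \<in> best_A A B" for e
  proof -
    have eA: "e \<in> A" and ie: "infdist e B = setdist A B" using e unfolding best_A_def by auto
    have "\<forall>\<eta>>0. \<exists>y\<in>B. dist y (e + v) < \<eta>"
    proof (intro allI impI)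
      fix \<eta> :: real assume "\<eta> > 0"
      then obtain \<tau> where t: "\<tau> > 0" "\<forall>k\<in>K. norm k < norm v + \<tau> \<longrightarrow> norm (k - v) < \<eta>"
        using close by blast
      have "infdist e B < norm v + \<tau>" using ie Dle t(1) by linarith
      then obtain b where b: "b \<in> B" "dist e b < norm v + \<tau>" using infdist_ltE'[OF B(3)] by blast
      have "norm (b - e) < norm v + \<tau>" using b(2) by (simp add: dist_norm norm_minus_commute)
      hence "norm ((b - e) - v) < \<eta>" using t(2) inK[OF eA b(1)] by blast
      thus "\<exists>y\<in>B. dist y (e + v) < \<eta>" using b(1) by (auto simp: dist_norm algebra_simps)
    qed
    thus ?thesis using closed_approachable[OF B(1)] unfolding v_def by blast
  qed
  show fA: "f - gap_vec A B \<in> A" if f: "f \<in> best_B A B" for f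
  proof -
    have fB: "f \<in> B" and ie: "infdist f A = setdist A B" using f unfolding best_B_def by auto
    have "\<forall>\<eta>>0. \<exists>y\<in>A. dist y (f - v) < \<eta>"
    proof (intro allI impI)
      fix \<eta> :: real assume "\<eta> > 0"
      then obtain \<tau> where t: "\<tau> > 0" "\<forall>k\<in>K. norm k < norm v + \<tau> \<longrightarrow> norm (k - v) < \<eta>"
        using close by blast
      have "infdist f A < norm v + \<tau>" using ie Dle t(1) by linarith
      then obtain a where a: "a \<in> A" "dist f a < norm v + \<tau>" using infdist_ltE'[OF A(3)] by blast
      have "norm ((f - a) - v) < \<eta>" using t(2) inK[OF a(1) fB] a(2)
        by (simp add: dist_norm)
      moreover have "a - (f - v) = - ((f - a) - v)" by (simp add: algebra_simps)
      ultimately have "dist a (f - v) < \<eta>" by (simp only: dist_norm norm_minus_cancel)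
      thus "\<exists>y\<in>A. dist y (f - v) < \<eta>" using a(1) by blast
    qed
    thus ?thesis using closed_approachable[OF A(1)] unfolding v_def by blast
  qed
  show "inner (a - e) (gap_vec A B) \<le> 0" if a: "a \<in> A" and e: "e \<in> best_A A B" for a e
  proof -
    have "e + v \<in> B" using \<open>\<And>e. e \<in> best_A A B \<Longrightarrow> e + gap_vec A B \<in> B\<close>[OF e] unfolding v_def .
    hence "0 \<le> inner ((e + v - a) - v) v" using vvar inK[OF a] by blast
    thus ?thesis unfolding v_def[symmetric] by (simp add: inner_diff_left)
  qed
  show "inner (b - f) (gap_vec A B) \<ge> 0" if b: "b \<in> B" and f: "f \<in> best_B A B" for b f
  proof -
    have "f - v \<in> A" using fA[OF f] unfolding v_def .
    hence "0 \<le> inner ((b - (f - v)) - v) v" using vvar inK[OF _ b] by blast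
    thus ?thesis unfolding v_def[symmetric] by (simp add: inner_diff_left)
  qed
qed


lemma norm_comb_le:
  fixes p q :: "'a::real_normed_vector"
  assumes "0 \<le> t" "t \<le> 1"
  shows "norm ((1 - t) *\<^sub>R p + t *\<^sub>R q) \<le> (1 - t) * norm p + t * norm q"
proof -
  have "norm ((1 - t) *\<^sub>R p + t *\<^sub>R q) \<le> norm ((1 - t) *\<^sub>R p) + norm (t *\<^sub>R q)"
    by (rule norm_triangle_ineq)
  also have "\<dots> = (1 - t) * norm p + t * norm q" using assms by simp
  finally show ?thesis .
qed

lemma dir_bound:
  fixes C :: "'a::real_inner set"
  assumes "convex C" "x \<in> C" "a \<in> C" "\<epsilon> > 0" "\<epsilon> \<le> norm (a - x)"
    and H: "\<And>z. z \<in> C \<Longrightarrow> norm (z - x) = \<epsilon> \<Longrightarrow> inner (z - x) w \<le> K"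
  shows "inner (a - x) w \<le> K * norm (a - x) / \<epsilon>"
proof -
  define s where "s = \<epsilon> / norm (a - x)"
  have npos: "norm (a - x) > 0" using assms(4,5) by linarith
  have s: "0 < s" "s \<le> 1" unfolding s_def using assms(4,5) npos by (auto simp: field_simps)
  define z where "z = (1 - s) *\<^sub>R x + s *\<^sub>R a"
  have zC: "z \<in> C" unfolding z_def using convexD[OF assms(1) assms(2) assms(3), of "1-s" s] s by simp
  have zx: "z - x = s *\<^sub>R (a - x)" unfolding z_def by (simp add: algebra_simps)
  have "norm (z - x) = s * norm (a - x)" unfolding zx using s by simp
  also have "\<dots> = \<epsilon>" unfolding s_def using npos by simp
  finally have "inner (z - x) w \<le> K" using H[OF zC] by blast
  hence "s * inner (a - x) w \<le> K" unfolding zx by simp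
  hence "inner (a - x) w \<le> K / s" using s by (simp add: field_simps)
  thus ?thesis unfolding s_def using npos assms(4) by (simp add: field_simps)
qed

lemma cos_le:
  fixes P Q :: "'a::real_inner"
  assumes "norm P > 0" "\<gamma> > 0" "\<gamma> \<le> norm Q" "\<delta> > 0" "inner P Q \<le> \<delta> * \<gamma> * norm P"
  shows "cosv P Q \<le> \<delta>"
proof -
  have "\<delta> * \<gamma> * norm P \<le> \<delta> * (norm P * norm Q)"
    using assms by (simp add: mult_left_mono mult.commute mult.left_commute)
  hence "inner P Q \<le> \<delta> * (norm P * norm Q)" using assms(5) by linarith
  moreover have "norm P * norm Q > 0" using assms(1) assms(2) assms(3) by (intro mult_pos_pos) auto
  ultimately show ?thesis unfolding cosv_def by (simp add: pos_divide_le_eq)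
qed

theorem lemma4p6:
  fixes A B :: "'a::{real_inner, complete_space} set"
    and An Bn :: "nat \<Rightarrow> 'a set"
    and a x b y :: "nat \<Rightarrow> 'a"
    and \<delta> \<epsilon> :: real
  assumes "closed A" "convex A" "A \<noteq> {}"
    and "closed B" "convex B" "B \<noteq> {}"
    and "best_A A B \<noteq> {}" "bounded (best_A A B)"
    and "best_B A B \<noteq> {}" "bounded (best_B A B)"
    and "\<And>n. closed (An n) \<and> convex (An n) \<and> An n \<noteq> {}"
    and "\<And>n. closed (Bn n) \<and> convex (Bn n) \<and> Bn n \<noteq> {}"
    and "aw_conv An A" and "aw_conv Bn B"
    and "regular_couple A B"
    and "\<delta> > 0" and "\<epsilon> > 0"
    and "\<And>n. a n \<in> An n \<and> x n \<in> An n"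
    and "\<And>n. b n \<in> Bn n \<and> y n \<in> Bn n"
    and "(\<lambda>n. infdist (x n) (best_A A B)) \<longlonglongrightarrow> 0"
    and "(\<lambda>n. infdist (y n) (best_B A B)) \<longlonglongrightarrow> 0"
  shows "\<exists>n2. \<forall>n\<ge>n2.
     ((infdist (a n) (best_A A B) \<ge> 2 * \<epsilon> \<and> infdist (b n) (best_B A B) \<ge> 2 * \<epsilon>
        \<and> a n = metric_proj (An n) (b n))
       \<longrightarrow> cosv (x n - a n) (b n - (a n + gap_vec A B)) \<le> \<delta>)
   \<and> ((infdist (a n) (best_A A B) \<ge> 2 * \<epsilon> \<and> infdist (b (Suc n)) (best_B A B) \<ge> 2 * \<epsilon>
        \<and> b (Suc n) = metric_proj (Bn (Suc n)) (a n))
       \<longrightarrow> cosv (y (Suc n) - b (Suc n)) (a n + gap_vec A B - b (Suc n)) \<le> \<delta>)"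
proof -
  define v where "v = gap_vec A B"
  define E where "E = best_A A B"
  define F where "F = best_B A B"
  note gf = gap_facts[OF assms(1-6)]
  have Ev: "\<And>e. e \<in> E \<Longrightarrow> e + v \<in> B" using gf(1) unfolding E_def v_def .
  have Einner: "\<And>a e. a \<in> A \<Longrightarrow> e \<in> E \<Longrightarrow> inner (a - e) v \<le> 0"
    using gf(3) unfolding E_def v_def .
  have Finner: "\<And>b f. b \<in> B \<Longrightarrow> f \<in> F \<Longrightarrow> inner (b - f) v \<ge> 0"
    using gf(4) unfolding F_def v_def .
  have Ene: "E \<noteq> {}" and Fne: "F \<noteq> {}" using assms(7,9) unfolding E_def F_def .
  obtain ME where ME: "ME > 0" "\<And>e. e \<in> E \<Longrightarrow> norm e \<le> ME"
    using assms(8) unfolding E_def bounded_pos by blast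
  obtain MF where MF: "MF > 0" "\<And>f. f \<in> F \<Longrightarrow> norm f \<le> MF"
    using assms(10) unfolding F_def bounded_pos by blast
  have cA: "\<And>n. closed (An n)" "\<And>n. convex (An n)" "\<And>n. An n \<noteq> {}" using assms(11) by auto
  have cB: "\<And>n. closed (Bn n)" "\<And>n. convex (Bn n)" "\<And>n. Bn n \<noteq> {}" using assms(12) by auto
  have aA: "\<And>n. a n \<in> An n" and xA: "\<And>n. x n \<in> An n" using assms(18) by auto
  have bB: "\<And>n. b n \<in> Bn n" and yB: "\<And>n. y n \<in> Bn n" using assms(19) by auto
  have \<epsilon>: "\<epsilon> > 0" and \<delta>: "\<delta> > 0" using assms(16,17) by auto
  define \<epsilon>' where "\<epsilon>' = min \<epsilon> (1/2)"
  have \<epsilon>'pos: "\<epsilon>' > 0" unfolding \<epsilon>'_def using \<epsilon> by simp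
  obtain \<delta>r where \<delta>r: "\<delta>r > 0"
    "\<And>z. max (infdist z A) (infdist z ((\<lambda>b. b - v) ` B)) \<le> \<delta>r \<Longrightarrow> infdist z E \<le> \<epsilon>'"
    using assms(15) \<epsilon>'pos unfolding regular_couple_def v_def E_def by blast
  define \<gamma> where "\<gamma> = min 1 (\<delta>r/4)"
  have \<gamma>: "\<gamma> > 0" "\<gamma> \<le> 1" "4*\<gamma> \<le> \<delta>r" unfolding \<gamma>_def using \<delta>r(1) by auto
  define r where "r = 2*ME + 2"
  obtain N1 :: nat where N1: "ME + MF + r + norm v + \<epsilon> + 4 \<le> real N1"
    using real_arch_simple by blast
  have nv: "norm v \<ge> 0" by simp
  define \<eta> where "\<eta> = min (min \<gamma> \<epsilon>) (\<delta>*\<gamma>*\<epsilon>/(2*(norm v + 1)))"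
  have den: "2*(norm v + 1) > 0" using nv by (simp add: algebra_simps add_pos_nonneg)
  have \<eta>pos: "\<eta> > 0" unfolding \<eta>_def using \<gamma> \<epsilon> \<delta> den by simp
  have \<eta>le: "\<eta> \<le> \<gamma>" "\<eta> \<le> \<epsilon>" unfolding \<eta>_def by auto
  have \<eta>v: "2*\<eta>*norm v \<le> \<delta>*\<gamma>*\<epsilon>"
  proof -
    have "\<eta> \<le> \<delta>*\<gamma>*\<epsilon>/(2*(norm v + 1))" unfolding \<eta>_def by simp
    hence "\<eta> * (2*(norm v + 1)) \<le> \<delta>*\<gamma>*\<epsilon>" using pos_le_divide_eq[OF den] by blast
    moreover have "\<eta> * (2*(norm v + 1)) = 2*\<eta>*norm v + 2*\<eta>" by (simp add: algebra_simps)
    ultimately show ?thesis using \<eta>pos by linarith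
  qed
  have ev1: "\<forall>\<^sub>F n in sequentially. infdist (x n) E < \<eta>"
    using order_tendstoD(2)[OF assms(20) \<eta>pos] unfolding E_def .
  have ev2: "\<forall>\<^sub>F n in sequentially. infdist (y n) F < \<eta>"
    using order_tendstoD(2)[OF assms(21) \<eta>pos] unfolding F_def .
  have ev3: "\<forall>\<^sub>F n in sequentially. \<forall>z\<in>An n. norm z \<le> real N1 \<longrightarrow> (\<exists>c\<in>A. dist z c < \<eta>)"
    by (rule aw_near1[OF assms(13) assms(3) \<eta>pos])
  have ev4: "\<forall>\<^sub>F n in sequentially. \<forall>z\<in>B. norm z \<le> real N1 \<longrightarrow> (\<exists>c\<in>Bn n. dist z c < \<eta>)"
    by (rule aw_near2[OF assms(14) cB(3) \<eta>pos])
  have ev5: "\<forall>\<^sub>F n in sequentially. \<forall>z\<in>Bn n. norm z \<le> real N1 \<longrightarrow> (\<exists>c\<in>B. dist z c < \<eta>)"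
    by (rule aw_near1[OF assms(14) assms(6) \<eta>pos])
  obtain n2 where H: "\<And>n. n \<ge> n2 \<Longrightarrow> infdist (x n) E < \<eta> \<and> infdist (y n) F < \<eta>
      \<and> (\<forall>z\<in>An n. norm z \<le> real N1 \<longrightarrow> (\<exists>c\<in>A. dist z c < \<eta>))
      \<and> (\<forall>z\<in>B. norm z \<le> real N1 \<longrightarrow> (\<exists>c\<in>Bn n. dist z c < \<eta>))
      \<and> (\<forall>z\<in>Bn n. norm z \<le> real N1 \<longrightarrow> (\<exists>c\<in>B. dist z c < \<eta>))"
    using eventually_conj[OF ev1 eventually_conj[OF ev2 eventually_conj[OF ev3 eventually_conj[OF ev4 ev5]]]]
    unfolding eventually_sequentially by blast
  have xnear: "\<exists>e\<in>E. norm (x n - e) < \<eta>" if "n \<ge> n2" for n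
    using H[OF that] infdist_ltE'[OF Ene] by (simp add: dist_norm)
  have ynear: "\<exists>f\<in>F. norm (y n - f) < \<eta>" if "n \<ge> n2" for n
    using H[OF that] infdist_ltE'[OF Fne] by (simp add: dist_norm)
  have xbd: "norm (x n) \<le> ME + 1" if nn: "n \<ge> n2" for n
  proof -
    obtain e where e: "e \<in> E" "norm (x n - e) < \<eta>" using xnear[OF nn] by blast
    have "norm (x n) \<le> norm e + norm (x n - e)" by (metis add.commute norm_triangle_sub)
    thus ?thesis using ME(2)[OF e(1)] e(2) \<eta>le \<gamma>(2) by linarith
  qed
  have ybd: "norm (y n) \<le> MF + 1" if nn: "n \<ge> n2" for n
  proof -
    obtain f where f: "f \<in> F" "norm (y n - f) < \<eta>" using ynear[OF nn] by blast
    have "norm (y n) \<le> norm f + norm (y n - f)" by (metis add.commute norm_triangle_sub)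
    thus ?thesis using MF(2)[OF f(1)] f(2) \<eta>le \<gamma>(2) by linarith
  qed
  have rpos: "r > 0" unfolding r_def using ME(1) by simp
  have sep: "\<gamma> \<le> norm (u - w)"
    if nm: "n \<ge> n2" "m \<ge> n2" and u: "u \<in> An n" and w: "w + v \<in> Bn m" and ud: "2*\<epsilon> \<le> infdist u E"
    for n m u w
  proof (rule ccontr)
    assume "\<not> \<gamma> \<le> norm (u - w)"
    hence uw: "norm (u - w) < \<gamma>" by simp
    obtain e where e: "e \<in> E" "norm (x n - e) < \<eta>" using xnear[OF nm(1)] by blast
    have nx: "norm (x n) \<le> ME + 1" using xbd[OF nm(1)] .
    have evB: "e + v \<in> B" using Ev[OF e(1)] .
    have "norm (e + v) \<le> norm e + norm v" by (rule norm_triangle_ineq)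
    hence "norm (e + v) \<le> real N1" using ME(2)[OF e(1)] N1 nv MF(1) rpos \<epsilon> by linarith
    then obtain q where q: "q \<in> Bn m" "dist (e + v) q < \<eta>" using H[OF nm(2)] evB by blast
    have Hn: "\<forall>z\<in>An n. norm z \<le> real N1 \<longrightarrow> (\<exists>c\<in>A. dist z c < \<eta>)" using H[OF nm(1)] by blast
    have Hm: "\<forall>z\<in>Bn m. norm z \<le> real N1 \<longrightarrow> (\<exists>c\<in>B. dist z c < \<eta>)" using H[OF nm(2)] by blast
    have regE: "infdist z E \<le> \<epsilon>'" if "infdist z A \<le> \<delta>r" "infdist z ((\<lambda>b. b - v) ` B) \<le> \<delta>r" for z
      using \<delta>r(2)[of z] that by simp
    show False
    proof (cases "norm (u - x n) \<le> r")
      case True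
      have "norm u \<le> norm (x n) + norm (u - x n)" by (metis add.commute norm_triangle_sub)
      hence nu: "norm u \<le> ME + 1 + r" using nx True by linarith
      hence "norm u \<le> real N1" using N1 nv MF(1) \<epsilon> by linarith
      then obtain a' where a': "a' \<in> A" "dist u a' < \<eta>" using Hn u by blast
      have "norm (w + v) = norm ((u + v) - (u - w))" by (simp add: algebra_simps)
      also have "\<dots> \<le> norm (u + v) + norm (u - w)" by (rule norm_triangle_ineq4)
      also have "\<dots> \<le> norm u + norm v + norm (u - w)" using norm_triangle_ineq[of u v] by linarith
      finally have "norm (w + v) \<le> norm u + norm v + norm (u - w)" .
      hence "norm (w + v) \<le> real N1" using nu uw \<gamma>(2) N1 nv MF(1) \<epsilon> by linarith
      then obtain b' where b': "b' \<in> B" "dist (w + v) b' < \<eta>" using Hm w by blast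
      have iA: "infdist u A \<le> \<delta>r" using infdist_le[OF a'(1), of u] a'(2) \<eta>le \<gamma> by linarith
      have "b' - v \<in> (\<lambda>b. b - v) ` B" using b'(1) by blast
      hence "infdist u ((\<lambda>b. b - v) ` B) \<le> dist u (b' - v)" by (rule infdist_le)
      also have "dist u (b' - v) = norm ((u - w) + ((w + v) - b'))" by (simp add: dist_norm algebra_simps)
      also have "\<dots> \<le> norm (u - w) + norm ((w + v) - b')" by (rule norm_triangle_ineq)
      finally have iB: "infdist u ((\<lambda>b. b - v) ` B) \<le> \<delta>r"
        using uw b'(2) \<eta>le \<gamma> by (simp add: dist_norm)
      have "infdist u E \<le> \<epsilon>'" using regE[OF iA iB] .
      thus False using ud \<epsilon> unfolding \<epsilon>'_def by linarith
    next
      case False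
      hence ux: "norm (u - x n) > r" by simp
      define t where "t = r / norm (u - x n)"
      have nux: "norm (u - x n) > 0" using ux rpos by linarith
      have t0: "0 < t" unfolding t_def using nux rpos by simp
      have t1: "t < 1" unfolding t_def using nux ux by (simp add: divide_less_eq)
      note t = t0 t1
      define p where "p = (1 - t) *\<^sub>R x n + t *\<^sub>R u"
      have pA: "p \<in> An n" unfolding p_def using convexD[OF cA(2) xA u, of "1-t" t] t by simp
      have px: "p - x n = t *\<^sub>R (u - x n)" unfolding p_def by (simp add: algebra_simps)
      have npx: "norm (p - x n) = r" unfolding px t_def using nux rpos by simp
      define c where "c = (1 - t) *\<^sub>R q + t *\<^sub>R (w + v)"
      have cB': "c \<in> Bn m" unfolding c_def using convexD[OF cB(2) q(1) w, of "1-t" t] t by simp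
      have pc: "p - (c - v) = (1 - t) *\<^sub>R (x n - (q - v)) + t *\<^sub>R (u - w)"
        unfolding p_def c_def by (simp add: algebra_simps)
      have "norm (x n - (q - v)) = norm ((x n - e) + ((e + v) - q))" by (simp add: algebra_simps)
      also have "\<dots> \<le> norm (x n - e) + norm ((e + v) - q)" by (rule norm_triangle_ineq)
      finally have "norm (x n - (q - v)) \<le> norm (x n - e) + norm ((e + v) - q)" .
      hence xq: "norm (x n - (q - v)) \<le> 2*\<gamma>" using e(2) q(2) \<eta>le by (simp add: dist_norm)
      have "norm (p - (c - v)) \<le> (1 - t) * norm (x n - (q - v)) + t * norm (u - w)"
        unfolding pc using t by (intro norm_comb_le) auto
      also have "\<dots> \<le> (1 - t) * (2*\<gamma>) + t * (2*\<gamma>)"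
        using t xq uw \<gamma>(1) by (intro add_mono mult_left_mono) auto
      finally have npc: "norm (p - (c - v)) \<le> 2*\<gamma>" by (simp add: algebra_simps)
      have "norm p \<le> norm (x n) + norm (p - x n)" by (metis add.commute norm_triangle_sub)
      hence np: "norm p \<le> ME + 1 + r" using nx npx by linarith
      hence "norm p \<le> real N1" using N1 nv MF(1) \<epsilon> by linarith
      then obtain a' where a': "a' \<in> A" "dist p a' < \<eta>" using Hn pA by blast
      have "norm c = norm ((p + v) - (p - (c - v)))" by (simp add: algebra_simps)
      also have "\<dots> \<le> norm (p + v) + norm (p - (c - v))" by (rule norm_triangle_ineq4)
      also have "\<dots> \<le> norm p + norm v + norm (p - (c - v))" using norm_triangle_ineq[of p v] by linarith
      finally have "norm c \<le> norm p + norm v + norm (p - (c - v))" .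
      hence "norm c \<le> real N1" using np npc \<gamma>(2) N1 nv MF(1) \<epsilon> by linarith
      then obtain b' where b': "b' \<in> B" "dist c b' < \<eta>" using Hm cB' by blast
      have iA: "infdist p A \<le> \<delta>r" using infdist_le[OF a'(1), of p] a'(2) \<eta>le \<gamma> by linarith
      have "b' - v \<in> (\<lambda>b. b - v) ` B" using b'(1) by blast
      hence "infdist p ((\<lambda>b. b - v) ` B) \<le> dist p (b' - v)" by (rule infdist_le)
      also have "dist p (b' - v) = norm ((p - (c - v)) + (c - b'))" by (simp add: dist_norm algebra_simps)
      also have "\<dots> \<le> norm (p - (c - v)) + norm (c - b')" by (rule norm_triangle_ineq)
      finally have iB: "infdist p ((\<lambda>b. b - v) ` B) \<le> \<delta>r"
        using npc b'(2) \<eta>le \<gamma> by (simp add: dist_norm)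
      have le: "infdist p E \<le> \<epsilon>'" using regE[OF iA iB] .
      have "1 \<le> infdist p E"
      proof (rule infdist_geI[OF Ene])
        fix e' assume e': "e' \<in> E"
        have "norm (p - x n) \<le> norm (p - e') + norm e' + norm (x n)"
        proof -
          have "norm (p - x n) = norm ((p - e') + (e' - x n))" by (simp add: algebra_simps)
          also have "\<dots> \<le> norm (p - e') + norm (e' - x n)" by (rule norm_triangle_ineq)
          also have "\<dots> \<le> norm (p - e') + norm e' + norm (x n)"
            using norm_triangle_ineq4[of e' "x n"] by linarith
          finally show ?thesis .
        qed
        thus "1 \<le> dist p e'" using npx nx ME(2)[OF e'] unfolding r_def by (simp add: dist_norm)
      qed
      thus False using le unfolding \<epsilon>'_def by linarith
    qed
  qed
  have main: "\<exists>n2. \<forall>n\<ge>n2.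
     ((infdist (a n) E \<ge> 2 * \<epsilon> \<and> infdist (b n) F \<ge> 2 * \<epsilon>
        \<and> a n = metric_proj (An n) (b n))
       \<longrightarrow> cosv (x n - a n) (b n - (a n + v)) \<le> \<delta>)
   \<and> ((infdist (a n) E \<ge> 2 * \<epsilon> \<and> infdist (b (Suc n)) F \<ge> 2 * \<epsilon>
        \<and> b (Suc n) = metric_proj (Bn (Suc n)) (a n))
       \<longrightarrow> cosv (y (Suc n) - b (Suc n)) (a n + v - b (Suc n)) \<le> \<delta>)"
  proof (intro exI allI impI conjI)
    fix n assume n: "n \<ge> n2"
    have n': "Suc n \<ge> n2" using n by simp
    {
      assume h: "infdist (a n) E \<ge> 2 * \<epsilon> \<and> infdist (b n) F \<ge> 2 * \<epsilon> \<and> a n = metric_proj (An n) (b n)"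
      have Q: "\<gamma> \<le> norm (b n - (a n + v))"
      proof -
        have h1: "2*\<epsilon> \<le> infdist (a n) E" using h by blast
        have "(b n - v) + v \<in> Bn n" using bB[of n] by simp
        hence "\<gamma> \<le> norm (a n - (b n - v))" using sep[OF n n aA _ h1] by blast
        also have "\<dots> = norm (- (b n - (a n + v)))" by (simp add: algebra_simps)
        also have "\<dots> = norm (b n - (a n + v))" by (rule norm_minus_cancel)
        finally show ?thesis .
      qed
      have h1: "2*\<epsilon> \<le> infdist (a n) E" using h by blast
      have ha: "a n = metric_proj (An n) (b n)" using h by blast
      have hx: "infdist (x n) E < \<eta>" using H[OF n] by blast
      have "infdist (a n) E \<le> infdist (x n) E + norm (a n - x n)"
        using infdist_triangle[of "a n" E "x n"] by (simp only: dist_norm)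
      hence P: "\<epsilon> \<le> norm (a n - x n)" using h1 hx \<eta>le by linarith
      have proj: "inner (x n - a n) (b n - a n) \<le> 0"
        unfolding ha by (rule metric_proj_props(3)[OF cA(1) cA(2) cA(3) xA])
      have dir: "inner (a n - x n) v \<le> (\<delta>*\<gamma>*\<epsilon>) * norm (a n - x n) / \<epsilon>"
      proof (rule dir_bound[OF cA(2) xA aA \<epsilon> P])
        fix z assume z: "z \<in> An n" "norm (z - x n) = \<epsilon>"
        have "norm z \<le> norm (x n) + norm (z - x n)" by (metis add.commute norm_triangle_sub)
        hence "norm z \<le> real N1" using z(2) xbd[OF n] N1 nv MF(1) rpos nv by linarith
        then obtain a' where a': "a' \<in> A" "dist z a' < \<eta>" using H[OF n] z(1) by blast
        obtain e where e: "e \<in> E" "norm (x n - e) < \<eta>" using xnear[OF n] by blast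
        have "inner (z - x n) v = inner (z - a') v + inner (a' - e) v + inner (e - x n) v"
          by (simp add: inner_diff_left)
        also have "\<dots> \<le> norm (z - a') * norm v + 0 + norm (e - x n) * norm v"
          using Einner[OF a'(1) e(1)] norm_cauchy_schwarz[of "z - a'" v] norm_cauchy_schwarz[of "e - x n" v]
          by linarith
        also have "\<dots> \<le> \<eta> * norm v + 0 + \<eta> * norm v"
          using a'(2) e(2) by (intro add_mono mult_right_mono) (auto simp: dist_norm norm_minus_commute)
        finally show "inner (z - x n) v \<le> \<delta>*\<gamma>*\<epsilon>" using \<eta>v by linarith
      qed
      hence dir': "inner (a n - x n) v \<le> \<delta>*\<gamma>*norm (x n - a n)"
        using \<epsilon> by (simp add: norm_minus_commute)
      have "inner (x n - a n) (b n - (a n + v)) = inner (x n - a n) (b n - a n) + inner (a n - x n) v"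
        by (simp add: inner_diff_right inner_diff_left algebra_simps)
      hence "inner (x n - a n) (b n - (a n + v)) \<le> \<delta> * \<gamma> * norm (x n - a n)"
        using proj dir' by linarith
      moreover have "norm (x n - a n) > 0" using P \<epsilon> norm_minus_commute[of "x n" "a n"] by linarith
      ultimately show "cosv (x n - a n) (b n - (a n + v)) \<le> \<delta>"
        using cos_le \<gamma>(1) Q \<delta> by blast
    }
    {
      assume h: "infdist (a n) E \<ge> 2 * \<epsilon> \<and> infdist (b (Suc n)) F \<ge> 2 * \<epsilon>
        \<and> b (Suc n) = metric_proj (Bn (Suc n)) (a n)"
      have Q: "\<gamma> \<le> norm (a n + v - b (Suc n))"
      proof -
        have h1: "2*\<epsilon> \<le> infdist (a n) E" using h by blast
        have "(b (Suc n) - v) + v \<in> Bn (Suc n)" using bB[of "Suc n"] by simp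
        hence "\<gamma> \<le> norm (a n - (b (Suc n) - v))" using sep[OF n n' aA _ h1] by blast
        also have "\<dots> = norm (a n + v - b (Suc n))" by (simp add: algebra_simps)
        finally show ?thesis .
      qed
      have h2: "2*\<epsilon> \<le> infdist (b (Suc n)) F" using h by blast
      have hb: "b (Suc n) = metric_proj (Bn (Suc n)) (a n)" using h by blast
      have hy: "infdist (y (Suc n)) F < \<eta>" using H[OF n'] by blast
      have "infdist (b (Suc n)) F \<le> infdist (y (Suc n)) F + norm (b (Suc n) - y (Suc n))"
        using infdist_triangle[of "b (Suc n)" F "y (Suc n)"] by (simp only: dist_norm)
      hence P: "\<epsilon> \<le> norm (b (Suc n) - y (Suc n))" using h2 hy \<eta>le by linarith
      have proj: "inner (y (Suc n) - b (Suc n)) (a n - b (Suc n)) \<le> 0"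
        unfolding hb by (rule metric_proj_props(3)[OF cB(1) cB(2) cB(3) yB])
      have dir: "inner (b (Suc n) - y (Suc n)) (-v) \<le> (\<delta>*\<gamma>*\<epsilon>) * norm (b (Suc n) - y (Suc n)) / \<epsilon>"
      proof (rule dir_bound[OF cB(2) yB bB \<epsilon> P])
        fix z assume z: "z \<in> Bn (Suc n)" "norm (z - y (Suc n)) = \<epsilon>"
        have "norm z \<le> norm (y (Suc n)) + norm (z - y (Suc n))" by (metis add.commute norm_triangle_sub)
        hence "norm z \<le> real N1" using z(2) ybd[OF n'] N1 nv ME(1) rpos nv by linarith
        then obtain b' where b': "b' \<in> B" "dist z b' < \<eta>" using H[OF n'] z(1) by blast
        obtain f where f: "f \<in> F" "norm (y (Suc n) - f) < \<eta>" using ynear[OF n'] by blast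
        have "inner (z - y (Suc n)) (-v) = inner (b' - z) v - inner (b' - f) v + inner (y (Suc n) - f) v"
          by (simp add: inner_diff_left algebra_simps)
        also have "\<dots> \<le> norm (b' - z) * norm v - 0 + norm (y (Suc n) - f) * norm v"
          using Finner[OF b'(1) f(1)] norm_cauchy_schwarz[of "b' - z" v]
            norm_cauchy_schwarz[of "y (Suc n) - f" v]
          by linarith
        also have "\<dots> \<le> \<eta> * norm v - 0 + \<eta> * norm v"
          using b'(2) f(2) by (intro add_mono diff_mono mult_right_mono) (auto simp: dist_norm norm_minus_commute)
        finally show "inner (z - y (Suc n)) (-v) \<le> \<delta>*\<gamma>*\<epsilon>" using \<eta>v by linarith
      qed
      hence dir': "inner (y (Suc n) - b (Suc n)) v \<le> \<delta>*\<gamma>*norm (y (Suc n) - b (Suc n))"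
        using \<epsilon> by (simp add: norm_minus_commute inner_minus_right inner_diff_left)
      have "inner (y (Suc n) - b (Suc n)) (a n + v - b (Suc n))
          = inner (y (Suc n) - b (Suc n)) (a n - b (Suc n)) + inner (y (Suc n) - b (Suc n)) v"
        by (simp add: inner_diff_right inner_add_right algebra_simps)
      hence "inner (y (Suc n) - b (Suc n)) (a n + v - b (Suc n)) \<le> \<delta> * \<gamma> * norm (y (Suc n) - b (Suc n))"
        using proj dir' by linarith
      moreover have "norm (y (Suc n) - b (Suc n)) > 0" using P \<epsilon> norm_minus_commute[of "y (Suc n)" "b (Suc n)"] by linarith
      ultimately show "cosv (y (Suc n) - b (Suc n)) (a n + v - b (Suc n)) \<le> \<delta>"
        using cos_le \<gamma>(1) Q \<delta> by blast
    }
  qed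
  thus ?thesis unfolding v_def E_def F_def .
qed

end
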